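(* Let $\Omega := \{0,1\}^{\mathbb{Z}}$, let $\tau:\Omega\to\Omega$ be the shift $(\tau\omega)(x) := \omega(x-1)$, and let $T:\mathbb{Z}\to\mathbb{Z}$ be $Tx := x+1$. Let $\Delta\notin\mathbb{Z}$ be an extra symbol and set $T(\Delta):=\Delta$. Let $X:\Omega\to\mathbb{Z}\cup\{\Delta\}$ be a function such that $X^{-1}\{\Delta\}$ is countable and $X(\tau\omega)=T(X(\omega))$ for all $\omega\in\Omega$. Let $\mathcal{F}$ be any $\sigma$-algebra on $\Omega$ that contains all singletons and satisfies $\tau A\in\mathcal{F}$ whenever $A\in\mathcal{F}$ (where $\tau A:=\{\tau\omega:\omega\in A\}$), and suppose there is a measure $\mu$ on $\mathcal{F}$ with $\mu=\mu\circ\tau$, $\mu(\Omega)\in(0,\infty)$, and $\mu(\{\omega\})=0$ for all $\omega\in\Omega$. Then $X$ is not measurable with respect to $\mathcal{F}$, i.e., there exists $x\in\mathbb{Z}$ with $X^{-1}\{x\}\notin\mathcal{F}$.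
   Context: A function $X:\Omega\to\mathbb{Z}\cup\{\Delta\}$ is called measurable with respect to $\mathcal{F}$ if $X^{-1}\{x\}\in\mathcal{F}$ for all $x\in\mathbb{Z}$. *)

theory Defs
  imports "HOL-Analysis.Analysis"
begin

text \<open>Omega = {0,1}^Z is modelled as the type int => bool (False = 0, True = 1).
  The extra symbol Delta is modelled by None in int option.\<close>

definition shift :: "(int \<Rightarrow> bool) \<Rightarrow> (int \<Rightarrow> bool)" where
  "shift \<omega> = (\<lambda>x. \<omega> (x - 1))"

definition Tmap :: "int option \<Rightarrow> int option" where
  "Tmap = map_option (\<lambda>x. x + 1)"

end

theory Submission
  imports Defs
begin

lemma ennreal_const_suminf_top:
  assumes "(0::ennreal) < c" shows "(\<Sum>n. c) = \<infinity>"
proof (cases c)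
  case (real r)
  have "r \<noteq> 0" using assms real by (metis ennreal_0 less_irrefl)
  with real(1) have "r > 0" by linarith
  then have ns: "\<not> summable (\<lambda>_::nat. r)" by (simp add: summable_const_iff)
  have "(\<Sum>n. ennreal r) = top"
    by (rule summable_iff_suminf_neq_top) (use real(1) ns in auto)
  then show ?thesis using real(2) by simp
next
  case top
  have "(\<Sum>n::nat. top::ennreal) = top" by (meson ennreal_suminf_lessD top.not_eq_extremum)
  then show ?thesis using top by simp
qed

theorem lemma2:
  fixes X :: "(int \<Rightarrow> bool) \<Rightarrow> int option"
    and M :: "(int \<Rightarrow> bool) measure"
  assumes "countable (X -` {None})"
    and "\<forall>\<omega>. X (shift \<omega>) = Tmap (X \<omega>)"
    and "space M = UNIV"
    and "\<forall>\<omega>. {\<omega>} \<in> sets M"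
    and "\<forall>A \<in> sets M. shift ` A \<in> sets M"
    and "\<forall>A \<in> sets M. emeasure M (shift ` A) = emeasure M A"
    and "0 < emeasure M (space M)" and "emeasure M (space M) < \<infinity>"
    and "\<forall>\<omega>. emeasure M {\<omega>} = 0"
  shows "\<exists>x::int. X -` {Some x} \<notin> sets M"
proof (rule ccontr)
  assume "\<not> ?thesis"
  then have meas: "\<And>x. X -` {Some x} \<in> sets M" by auto
  define A where "A x = X -` {Some x}" for x
  have shA: "shift ` A x = A (x + 1)" for x
  proof
    show "shift ` A x \<subseteq> A (x + 1)"
      using assms(2) by (auto simp: A_def Tmap_def)
    show "A (x + 1) \<subseteq> shift ` A x"
    proof
      fix w assume w: "w \<in> A (x + 1)"
      define v where "v = (\<lambda>y. w (y + 1))"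
      have sv: "shift v = w" by (simp add: shift_def v_def)
      then have "Tmap (X v) = Some (x + 1)" using w assms(2) by (metis A_def vimage_singleton_eq)
      then have "X v = Some x" by (cases "X v") (auto simp: Tmap_def)
      then show "w \<in> shift ` A x" using sv by (auto simp: A_def)
    qed
  qed
  have step: "emeasure M (A (x + 1)) = emeasure M (A x)" for x
    using assms(6) meas[of x, folded A_def] shA[of x] by metis
  have const: "emeasure M (A x) = emeasure M (A 0)" for x
  proof (induction x rule: int_induct[where k=0])
    case base then show ?case by simp
  next
    case (step1 i) then show ?case using step by simp
  next
    case (step2 i) then show ?case using step[of "i - 1"] by simp
  qed
  have c0: "emeasure M (A 0) = 0"
  proof (rule ccontr)
    assume "emeasure M (A 0) \<noteq> 0"
    then have pos: "0 < emeasure M (A 0)" by (simp add: zero_less_iff_neq_zero)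
    have "(\<Sum>n. emeasure M (A (int n))) = emeasure M (\<Union>n. A (int n))"
      by (rule suminf_emeasure) (auto simp: A_def meas disjoint_family_on_def)
    also have "\<dots> \<le> emeasure M (space M)"
      by (rule emeasure_mono) (use sets.top[of M] in \<open>auto simp: assms(3)\<close>)
    finally have le: "(\<Sum>n. emeasure M (A (int n))) \<le> emeasure M (space M)" .
    have eq: "(\<lambda>n. emeasure M (A (int n))) = (\<lambda>n. emeasure M (A 0))" by (rule ext) (rule const)
    have "(\<Sum>n. emeasure M (A 0)) \<le> emeasure M (space M)" using le unfolding eq .
    then show False using ennreal_const_suminf_top[OF pos] assms(8) by (simp add: top_unique)
  qed
  have n1: "(\<Union>x\<in>UNIV. A x) \<in> null_sets M"
  proof (rule null_sets_UN')
    fix x :: int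
    have "emeasure M (A x) = 0" using const[of x] c0 by simp
    then show "A x \<in> null_sets M" using meas[of x] by (simp add: A_def null_sets_def)
  qed (rule countableI_type)
  have n2: "(\<Union>w\<in>X -` {None}. {w}) \<in> null_sets M"
    by (rule null_sets_UN') (use assms(1,4,9) in auto)
  have speq: "space M = (\<Union>x\<in>UNIV. A x) \<union> (\<Union>w\<in>X -` {None}. {w})"
    using assms(3) by (auto simp: A_def)
  have "space M \<in> null_sets M" unfolding speq by (rule null_sets.Un[OF n1 n2])
  then have "emeasure M (space M) = 0" by (rule null_setsD1)
  with assms(7) show False by (metis less_irrefl)
qed

end
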